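(* Let $\lambda\geqslant 1$ be a cardinal and $n$ a positive integer. Then the semigroup $\mathscr{I}_\lambda^n$ is algebraically $h$-closed in the class of (Hausdorff) topological inverse semigroups. Explicitly: for every (Hausdorff) topological inverse semigroup $S$ and every homomorphism $h\colon \mathscr{I}_\lambda^n\to S$, the image $(\mathscr{I}_\lambda^n)h$ is a closed subset of $S$.
   Context: All topological spaces are Hausdorff. A topological (inverse) semigroup is a topological space with a continuous semigroup operation (and, for inverse semigroups, continuous inversion $a\mapsto a^{-1}$, where $a^{-1}$ is the unique element with $aa^{-1}a=a$, $a^{-1}aa^{-1}=a^{-1}$). For a set $X$ of cardinality $\lambda$, $\mathscr{I}(X)$ is the symmetric inverse semigroup of all partial one-to-one maps of $X$ (including the empty map) under composition $x(\alpha\beta)=(x\alpha)\beta$ on $\operatorname{dom}(\alpha\beta)=\{y\in\operatorname{dom}\alpha: y\alpha\in\operatorname{dom}\beta\}$; the rank of $\alpha$ is $|\operatorname{ran}\alpha|$, and $\mathscr{I}_\lambda^n=\{\alpha\in\mathscr{I}(X): \operatorname{rank}\alpha\leqslant n\}$. Given a class $\mathfrak{S}$ of topological semigroups: $S\in\mathfrak{S}$ is $H$-closed in $\mathfrak{S}$ if $S$ is closed in every $T\in\mathfrak{S}$ containing $S$ as a (topological) subsemigroup; $S\in\mathfrak{S}$ is absolutely $H$-closed in $\mathfrak{S}$ if every continuous homomorphic image of $S$ in any $T\in\mathfrak{S}$ (with the subspace topology) is $H$-closed in $\mathfrak{S}$; a semigroup $S$ is algebraically $h$-closed in $\mathfrak{S}$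 if $S$ with the discrete topology belongs to $\mathfrak{S}$ and is absolutely $H$-closed in $\mathfrak{S}$. *)

theory Defs
  imports Complex_Main
begin

text \<open>Partial one-to-one maps of the ground set (the type 'a, of cardinality lambda)
  are represented as maps 'a \<rightharpoonup> 'a which are injective on their domain.\<close>

definition partial_bijection :: "('a \<rightharpoonup> 'a) \<Rightarrow> bool" where
  "partial_bijection f \<longleftrightarrow> inj_on f (dom f)"

text \<open>Composition in the paper's (left-to-right) convention: x(\<alpha>\<beta>) = (x\<alpha>)\<beta>.\<close>
definition pcomp :: "('a \<rightharpoonup> 'a) \<Rightarrow> ('a \<rightharpoonup> 'a) \<Rightarrow> ('a \<rightharpoonup> 'a)" where
  "pcomp \<alpha> \<beta> = \<beta> \<circ>\<^sub>m \<alpha>"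

definition I_rank :: "nat \<Rightarrow> ('a \<rightharpoonup> 'a) set" where
  "I_rank n = {f. partial_bijection f \<and> finite (ran f) \<and> card (ran f) \<le> n}"

text \<open>A (Hausdorff, via the type class t2_space) topological inverse semigroup structure
  on the type 'b, given by the multiplication mult.\<close>
definition inverse_semigroup :: "('b \<Rightarrow> 'b \<Rightarrow> 'b) \<Rightarrow> bool" where
  "inverse_semigroup mult \<longleftrightarrow>
     (\<forall>a b c. mult (mult a b) c = mult a (mult b c)) \<and>
     (\<forall>a. \<exists>!b. mult (mult a b) a = a \<and> mult (mult b a) b = b)"

definition sg_inverse :: "('b \<Rightarrow> 'b \<Rightarrow> 'b) \<Rightarrow> 'b \<Rightarrow> 'b" where
  "sg_inverse mult a = (THE b. mult (mult a b) a = a \<and> mult (mult b a) b = b)"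

definition topological_inverse_semigroup :: "('b::t2_space \<Rightarrow> 'b \<Rightarrow> 'b) \<Rightarrow> bool" where
  "topological_inverse_semigroup mult \<longleftrightarrow>
     inverse_semigroup mult \<and>
     continuous_on UNIV (\<lambda>p. mult (fst p) (snd p)) \<and>
     continuous_on UNIV (sg_inverse mult)"

end

theory Submission
  imports Defs
begin


definition uf :: "'a filter \<Rightarrow> bool" where
  "uf F \<longleftrightarrow> F \<noteq> bot \<and> (\<forall>P. eventually P F \<or> eventually (\<lambda>x. \<not> P x) F)"

lemma max_filter_uf:
  assumes "F \<noteq> bot"
  assumes max: "\<And>G. G \<noteq> bot \<Longrightarrow> G \<le> F \<Longrightarrow> F = G"
  shows "uf F"
  unfolding uf_def
proof (intro conjI allI assms(1))
  show "eventually P F \<or> (\<forall>\<^sub>Fx in F. \<not> P x)" for P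
  proof (rule disjCI)
    assume "\<not> (\<forall>\<^sub>Fx in F. \<not> P x)"
    then have "inf F (principal {x. P x}) \<noteq> bot"
      by (simp add: trivial_limit_def eventually_inf_principal not_eventually)
    then have F: "F = inf F (principal {x. P x})"
      by (rule max) simp
    show "eventually P F"
      by (subst F) (simp add: eventually_inf_principal)
  qed
qed

lemma ex_uf:
  fixes F :: "'a filter"
  assumes F: "F \<noteq> bot"
  shows "\<exists>U\<le>F. uf U"
proof -
  let ?X = "{G. G \<noteq> bot \<and> G \<le> F}"
  let ?R = "{(b, a). a \<noteq> bot \<and> a \<le> b \<and> b \<le> F}"
  have bot_notin_R: "c \<in> Chains ?R \<Longrightarrow> bot \<notin> c" for c
    by (auto simp: Chains_def)
  have [simp]: "Field ?R = ?X"
    by (auto simp: Field_def bot_unique)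
  have "\<exists>m\<in>Field ?R. \<forall>a\<in>Field ?R. (m, a) \<in> ?R \<longrightarrow> a = m" (is "\<exists>m\<in>?A. ?B m")
  proof (rule Zorns_po_lemma)
    show "Partial_order ?R"
      by (auto simp: partial_order_on_def preorder_on_def
          antisym_def refl_on_def trans_def Field_def bot_unique)
    show "\<exists>u\<in>Field ?R. \<forall>a\<in>C. (a, u) \<in> ?R" if C: "C \<in> Chains ?R" for C
    proof (simp, intro exI conjI ballI)
      have Inf_C: "Inf C \<noteq> bot" "Inf C \<le> F" if "C \<noteq> {}"
      proof -
        from C that have "Inf C = bot \<longleftrightarrow> (\<exists>x\<in>C. x = bot)"
          unfolding trivial_limit_def by (intro eventually_Inf_base) (auto simp: Chains_def)
        with C show "Inf C \<noteq> bot"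
          by (simp add: bot_notin_R)
        from that obtain x where "x \<in> C" by auto
        with C show "Inf C \<le> F"
          by (auto intro!: Inf_lower2[of x] simp: Chains_def)
      qed
      then have [simp]: "inf F (Inf C) = (if C = {} then F else Inf C)"
        using C by (auto simp add: inf_absorb2)
      from C show "inf F (Inf C) \<noteq> bot"
        by (simp add: F Inf_C)
      from C show "inf F (Inf C) \<le> F"
        by (simp add: Chains_def Inf_C F)
      with C show "inf F (Inf C) \<le> x" "x \<le> F" if "x \<in> C" for x
        using that  by (auto intro: Inf_lower simp: Chains_def)
    qed
  qed
  then obtain U where U: "U \<in> ?A" "?B U" ..
  show ?thesis
  proof
    from U show "U \<le> F \<and> uf U"
      by (auto intro!: max_filter_uf)
  qed
qed

lemma uf_finite_const:
  assumes "uf U" "finite S" "eventually (\<lambda>i. f i \<in> S) U"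
  shows "\<exists>c\<in>S. eventually (\<lambda>i. f i = c) U"
proof (rule ccontr)
  assume "\<not> ?thesis"
  then have "\<forall>c\<in>S. eventually (\<lambda>i. f i \<noteq> c) U"
    using assms(1) unfolding uf_def by blast
  then have "eventually (\<lambda>i. \<forall>c\<in>S. f i \<noteq> c) U"
    using assms(2) by (simp add: eventually_ball_finite)
  with assms(3) have "eventually (\<lambda>i. False) U"
    by (rule eventually_elim2) auto
  with assms(1) show False unfolding uf_def by (simp add: trivial_limit_def)
qed

definition eps :: "'a set \<Rightarrow> ('a \<rightharpoonup> 'a)" where
  "eps D = (\<lambda>a. if a \<in> D then Some a else None)"

definition pinv :: "('a \<rightharpoonup> 'a) \<Rightarrow> ('a \<rightharpoonup> 'a)" where
  "pinv \<alpha> = (\<lambda>b. if b \<in> ran \<alpha> then Some (THE a. \<alpha> a = Some b) else None)"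

lemma eps_comp: "pcomp (eps D) (eps E) = eps (D \<inter> E)"
  by (auto simp: pcomp_def eps_def map_comp_def fun_eq_iff)

lemma dom_eps[simp]: "dom (eps D) = D" and ran_eps[simp]: "ran (eps D) = D"
  by (auto simp: eps_def dom_def ran_def split: if_splits)

lemma eps_I: "finite D \<Longrightarrow> card D \<le> n \<Longrightarrow> eps D \<in> I_rank n"
  by (simp add: I_rank_def partial_bijection_def) (auto simp: inj_on_def eps_def split: if_splits)

lemma ran_comp_sub: "ran (pcomp \<alpha> \<beta>) \<subseteq> ran \<beta>"
  by (auto simp: pcomp_def map_comp_def ran_def split: option.splits)

lemma pcomp_I: assumes "\<alpha> \<in> I_rank n" "\<beta> \<in> I_rank n" shows "pcomp \<alpha> \<beta> \<in> I_rank n"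
proof -
  have "finite (ran \<beta>)" "card (ran \<beta>) \<le> n" using assms by (auto simp: I_rank_def)
  then have "finite (ran (pcomp \<alpha> \<beta>))" "card (ran (pcomp \<alpha> \<beta>)) \<le> n"
    using ran_comp_sub[of \<alpha> \<beta>] by (auto intro: finite_subset dest: card_mono)
  moreover have "partial_bijection (pcomp \<alpha> \<beta>)"
    using assms unfolding I_rank_def partial_bijection_def inj_on_def pcomp_def map_comp_def
    by (auto split: option.splits) (metis domI option.inject)
  ultimately show ?thesis by (simp add: I_rank_def)
qed

lemma the_pb: assumes "partial_bijection \<alpha>" "\<alpha> a = Some b" shows "(THE a'. \<alpha> a' = Some b) = a"
proof (rule the_equality)
  show "\<alpha> a = Some b" by fact
  fix a' assume a': "\<alpha> a' = Some b"
  have i: "inj_on \<alpha> (dom \<alpha>)" using assms(1) by (simp add: partial_bijection_def)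
  have d: "a' \<in> dom \<alpha>" "a \<in> dom \<alpha>" using a' assms(2) by blast+
  have e: "\<alpha> a' = \<alpha> a" using a' assms(2) by simp
  show "a' = a" by (rule inj_onD[OF i e d])
qed

lemma pinv_simp: assumes "partial_bijection \<alpha>"
  shows "pinv \<alpha> b = Some a \<longleftrightarrow> \<alpha> a = Some b"
proof
  assume p: "pinv \<alpha> b = Some a"
  then have b: "b \<in> ran \<alpha>" by (simp add: pinv_def split: if_splits)
  then obtain a0 where a0: "\<alpha> a0 = Some b" by (auto simp: ran_def)
  have "pinv \<alpha> b = Some a0" using b the_pb[OF assms a0] by (simp add: pinv_def)
  then show "\<alpha> a = Some b" using p a0 by simp
next
  assume a: "\<alpha> a = Some b"
  then have b: "b \<in> ran \<alpha>" by (auto simp: ran_def)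
  show "pinv \<alpha> b = Some a" using b the_pb[OF assms a] by (simp add: pinv_def)
qed

lemma pinv_None: "pinv \<alpha> b = None \<longleftrightarrow> b \<notin> ran \<alpha>"
  unfolding pinv_def by simp

lemma dom_pinv: assumes "partial_bijection \<alpha>" shows "ran (pinv \<alpha>) = dom \<alpha>"
proof (intro equalityI subsetI)
  fix x assume "x \<in> ran (pinv \<alpha>)"
  then obtain b where "pinv \<alpha> b = Some x" unfolding ran_def by blast
  then have "\<alpha> x = Some b" using pinv_simp[OF assms] by blast
  then show "x \<in> dom \<alpha>" by blast
next
  fix x assume "x \<in> dom \<alpha>"
  then obtain b where "\<alpha> x = Some b" by blast
  then have "pinv \<alpha> b = Some x" using pinv_simp[OF assms] by blast
  then show "x \<in> ran (pinv \<alpha>)" unfolding ran_def by blast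
qed

lemma comp1: assumes "partial_bijection \<alpha>" shows "pcomp \<alpha> (pinv \<alpha>) = eps (dom \<alpha>)"
  unfolding fun_eq_iff pcomp_def map_comp_def eps_def
  using pinv_simp[OF assms] by (auto split: option.splits)

lemma comp2: assumes "partial_bijection \<alpha>" shows "pcomp (pinv \<alpha>) \<alpha> = eps (ran \<alpha>)"
proof -
  have "(case pinv \<alpha> b of None \<Rightarrow> None | Some a \<Rightarrow> \<alpha> a) = (if b \<in> ran \<alpha> then Some b else None)" for b
  proof (cases "pinv \<alpha> b")
    case None then show ?thesis using pinv_None[of \<alpha> b] by simp
  next
    case (Some a)
    then have "\<alpha> a = Some b" using pinv_simp[OF assms] by simp
    then show ?thesis using Some by (auto simp: ran_def)
  qed
  then show ?thesis unfolding fun_eq_iff pcomp_def map_comp_def eps_def by simp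
qed

lemma comp3: "pcomp (eps (dom \<alpha>)) \<alpha> = \<alpha>"
  unfolding fun_eq_iff pcomp_def map_comp_def eps_def by (auto simp: dom_def)

lemma comp4: assumes "partial_bijection \<alpha>" shows "pcomp (eps (ran \<alpha>)) (pinv \<alpha>) = pinv \<alpha>"
proof -
  have "pcomp (eps (ran \<alpha>)) (pinv \<alpha>) b = pinv \<alpha> b" for b
    unfolding pcomp_def map_comp_def eps_def
    using pinv_simp[OF assms, of b] pinv_None[of \<alpha> b]
    by (cases "pinv \<alpha> b") (auto simp: ran_def dom_def)
  then show ?thesis by auto
qed

lemma pcomp_assoc: "pcomp (pcomp a b) c = pcomp a (pcomp b c)"
  unfolding pcomp_def   unfolding pcomp_def by (rule ext) (simp add: map_comp_def split: option.split)

lemma pinv_I: assumes "\<alpha> \<in> I_rank n" shows "pinv \<alpha> \<in> I_rank n"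
proof -
  have pb: "partial_bijection \<alpha>" "finite (ran \<alpha>)" "card (ran \<alpha>) \<le> n" using assms by (auto simp: I_rank_def)
  have img: "ran \<alpha> = (\<lambda>a. the (\<alpha> a)) ` dom \<alpha>"
  proof (intro equalityI subsetI)
    fix x assume "x \<in> ran \<alpha>"
    then obtain a where "\<alpha> a = Some x" unfolding ran_def by blast
    then show "x \<in> (\<lambda>a. the (\<alpha> a)) ` dom \<alpha>" by force
  next
    fix x assume "x \<in> (\<lambda>a. the (\<alpha> a)) ` dom \<alpha>"
    then obtain a y where "\<alpha> a = Some y" "x = the (\<alpha> a)" by blast
    then show "x \<in> ran \<alpha>" unfolding ran_def by auto
  qed
  have inj: "inj_on (\<lambda>a. the (\<alpha> a)) (dom \<alpha>)"
  proof (rule inj_onI)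
    fix a b assume ab: "a \<in> dom \<alpha>" "b \<in> dom \<alpha>" "the (\<alpha> a) = the (\<alpha> b)"
    then have "\<alpha> a = \<alpha> b" by force
    moreover have "inj_on \<alpha> (dom \<alpha>)" using pb(1) by (simp add: partial_bijection_def)
    ultimately show "a = b" using ab by (meson inj_onD)
  qed
  have fd: "finite (dom \<alpha>)" using pb(2) img finite_image_iff[OF inj] by simp
  have cd: "card (dom \<alpha>) = card (ran \<alpha>)" using img card_image[OF inj] by simp
  have "partial_bijection (pinv \<alpha>)"
    unfolding partial_bijection_def
  proof (rule inj_onI)
    fix x y assume "x \<in> dom (pinv \<alpha>)" "y \<in> dom (pinv \<alpha>)" "pinv \<alpha> x = pinv \<alpha> y"
    then obtain a where "pinv \<alpha> x = Some a" "pinv \<alpha> y = Some a" by auto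
    then have "\<alpha> a = Some x" "\<alpha> a = Some y" using pinv_simp[OF pb(1)] by blast+
    then show "x = y" by simp
  qed
  then show ?thesis using pb fd cd dom_pinv[OF pb(1)] by (simp add: I_rank_def)
qed



lemma tend_mult:
  assumes c: "continuous_on UNIV (\<lambda>p. mult (fst p) (snd p))"
    and f: "(f \<longlongrightarrow> a) F" and g: "(g \<longlongrightarrow> b) F"
  shows "((\<lambda>i. mult (f i) (g i)) \<longlongrightarrow> mult a b) F"
  using continuous_on_tendsto_compose[OF c tendsto_Pair[OF f g]] by simp

lemma lim_ev_const:
  fixes f :: "_ \<Rightarrow> 'b::t2_space"
  assumes "F \<noteq> bot" "(f \<longlongrightarrow> a) F" "eventually (\<lambda>i. f i = c) F"
  shows "a = c"
  using tendsto_unique[OF assms(1) assms(2) tendsto_eventually[OF assms(3)]] .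

lemma dom_comp_sub: "dom (pcomp \<alpha> \<beta>) \<subseteq> dom \<alpha>"
  by (auto simp: pcomp_def map_comp_def dom_def split: option.splits)

lemma sg_inv_prop:
  assumes "inverse_semigroup mult"
  shows "mult (mult x (sg_inverse mult x)) x = x \<and> mult (mult (sg_inverse mult x) x) (sg_inverse mult x) = sg_inverse mult x"
proof -
  have ex: "\<exists>!b. mult (mult x b) x = x \<and> mult (mult b x) b = b"
    using assms unfolding inverse_semigroup_def by blast
  show ?thesis unfolding sg_inverse_def by (rule theI'[OF ex])
qed

lemma sg_inv_h:
  assumes isg: "inverse_semigroup mult"
    and hom: "\<forall>\<alpha>\<in>I_rank n. \<forall>\<beta>\<in>I_rank n. h (pcomp \<alpha> \<beta>) = mult (h \<alpha>) (h \<beta>)"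
    and a: "\<alpha> \<in> I_rank n"
  shows "h (pinv \<alpha>) = sg_inverse mult (h \<alpha>)"
proof -
  have pb: "partial_bijection \<alpha>" using a by (simp add: I_rank_def)
  have p: "pinv \<alpha> \<in> I_rank n" using pinv_I[OF a] .
  have e1: "eps (dom \<alpha>) \<in> I_rank n" using pcomp_I[OF a p] comp1[OF pb] by simp
  have e2: "eps (ran \<alpha>) \<in> I_rank n" using pcomp_I[OF p a] comp2[OF pb] by simp
  have H: "\<And>x y. x \<in> I_rank n \<Longrightarrow> y \<in> I_rank n \<Longrightarrow> mult (h x) (h y) = h (pcomp x y)"
    using hom by simp
  have "mult (h \<alpha>) (h (pinv \<alpha>)) = h (eps (dom \<alpha>))"
    using H[OF a p] comp1[OF pb] by simp
  then have 1: "mult (mult (h \<alpha>) (h (pinv \<alpha>))) (h \<alpha>) = h \<alpha>"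
    using H[OF e1 a] comp3[of \<alpha>] by simp
  have "mult (h (pinv \<alpha>)) (h \<alpha>) = h (eps (ran \<alpha>))"
    using H[OF p a] comp2[OF pb] by simp
  then have 2: "mult (mult (h (pinv \<alpha>)) (h \<alpha>)) (h (pinv \<alpha>)) = h (pinv \<alpha>)"
    using H[OF e2 p] comp4[OF pb] by simp
  have ex: "\<exists>!b. mult (mult (h \<alpha>) b) (h \<alpha>) = h \<alpha> \<and> mult (mult b (h \<alpha>)) b = b"
    using isg unfolding inverse_semigroup_def by blast
  show ?thesis unfolding sg_inverse_def
    by (rule the1_equality[OF ex, symmetric]) (use 1 2 in auto)
qed

lemma idem_lim:
  fixes mult :: "'b::t2_space \<Rightarrow> 'b \<Rightarrow> 'b"
  assumes c: "continuous_on UNIV (\<lambda>p. mult (fst p) (snd p))"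
    and hom: "\<forall>\<alpha>\<in>I_rank n. \<forall>\<beta>\<in>I_rank n. h (pcomp \<alpha> \<beta>) = mult (h \<alpha>) (h \<beta>)"
    and U: "uf U"
    and ev: "eventually (\<lambda>i. finite (D i) \<and> card (D i) \<le> n) U"
    and lim: "((\<lambda>i. h (eps (D i))) \<longlongrightarrow> g) U"
  shows "\<exists>E. finite E \<and> card E \<le> n \<and> g = h (eps E)"
proof -
  have Ub: "U \<noteq> bot" using U by (simp add: uf_def)
  define E where "E = {a. eventually (\<lambda>i. a \<in> D i) U}"
  have key: "eventually (\<lambda>i. D i \<inter> F = E \<inter> F) U" if "finite F" for F
  proof -
    have "\<forall>a\<in>F. eventually (\<lambda>i. a \<in> D i \<longleftrightarrow> a \<in> E) U"
    proof
      fix a assume "a \<in> F"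
      show "eventually (\<lambda>i. a \<in> D i \<longleftrightarrow> a \<in> E) U"
      proof (cases "a \<in> E")
        case True then show ?thesis by (simp add: E_def)
      next
        case False
        have "eventually (\<lambda>i. a \<in> D i) U \<or> eventually (\<lambda>i. \<not> a \<in> D i) U"
          using U unfolding uf_def by blast
        then have "eventually (\<lambda>i. a \<notin> D i) U" using False unfolding E_def by blast
        then show ?thesis using False by simp
      qed
    qed
    then have "eventually (\<lambda>i. \<forall>a\<in>F. a \<in> D i \<longleftrightarrow> a \<in> E) U"
      using that by (simp add: eventually_ball_finite)
    then show ?thesis by (rule eventually_mono) blast
  qed
  have sub: "card F \<le> n" if "finite F" "F \<subseteq> E" for F
  proof -
    have "eventually (\<lambda>i. D i \<inter> F = E \<inter> F \<and> finite (D i) \<and> card (D i) \<le> n) U"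
      using key[OF that(1)] ev by (rule eventually_conj)
    then obtain i where "D i \<inter> F = E \<inter> F" "finite (D i)" "card (D i) \<le> n"
      using eventually_happens'[OF Ub] by blast
    then have "F \<subseteq> D i" using that(2) by blast
    then show ?thesis using card_mono[OF \<open>finite (D i)\<close>] \<open>card (D i) \<le> n\<close> le_trans by blast
  qed
  have finE: "finite E"
  proof (rule ccontr)
    assume "infinite E"
    then obtain F where "finite F" "card F = Suc n" "F \<subseteq> E"
      using infinite_arbitrarily_large by blast
    then show False using sub[of F] by simp
  qed
  have cardE: "card E \<le> n" using sub[OF finE] by simp
  have gF: "mult g (h (eps F)) = h (eps (E \<inter> F))" if "finite F" "card F \<le> n" for F
  proof -
    have t: "((\<lambda>i. mult (h (eps (D i))) (h (eps F))) \<longlongrightarrow> mult g (h (eps F))) U"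
      by (rule tend_mult[OF c lim tendsto_const])
    have "eventually (\<lambda>i. D i \<inter> F = E \<inter> F \<and> finite (D i) \<and> card (D i) \<le> n) U"
      using key[OF that(1)] ev by (rule eventually_conj)
    then have "eventually (\<lambda>i. mult (h (eps (D i))) (h (eps F)) = h (eps (E \<inter> F))) U"
    proof (rule eventually_mono)
      fix i assume i: "D i \<inter> F = E \<inter> F \<and> finite (D i) \<and> card (D i) \<le> n"
      then have "mult (h (eps (D i))) (h (eps F)) = h (pcomp (eps (D i)) (eps F))"
        using hom eps_I[of "D i" n] eps_I[OF that] by simp
      then show "mult (h (eps (D i))) (h (eps F)) = h (eps (E \<inter> F))"
        using i by (simp add: eps_comp)
    qed
    then show ?thesis using lim_ev_const[OF Ub t] by blast
  qed
  have gg: "mult g g = h (eps E)"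
  proof -
    have t: "((\<lambda>i. mult g (h (eps (D i)))) \<longlongrightarrow> mult g g) U"
      by (rule tend_mult[OF c tendsto_const lim])
    have "eventually (\<lambda>i. D i \<inter> E = E \<inter> E \<and> finite (D i) \<and> card (D i) \<le> n) U"
      using key[OF finE] ev by (rule eventually_conj)
    then have "eventually (\<lambda>i. mult g (h (eps (D i))) = h (eps E)) U"
    proof (rule eventually_mono)
      fix i assume i: "D i \<inter> E = E \<inter> E \<and> finite (D i) \<and> card (D i) \<le> n"
      then have "mult g (h (eps (D i))) = h (eps (E \<inter> D i))" using gF by blast
      moreover have "E \<inter> D i = E" using i by blast
      ultimately show "mult g (h (eps (D i))) = h (eps E)" by simp
    qed
    then show ?thesis using lim_ev_const[OF Ub t] by blast
  qed
  have idem: "mult g g = g"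
  proof -
    have t: "((\<lambda>i. mult (h (eps (D i))) (h (eps (D i)))) \<longlongrightarrow> mult g g) U"
      by (rule tend_mult[OF c lim lim])
    have "eventually (\<lambda>i. mult (h (eps (D i))) (h (eps (D i))) = h (eps (D i))) U"
      using ev
    proof (rule eventually_mono)
      fix i assume i: "finite (D i) \<and> card (D i) \<le> n"
      then have "mult (h (eps (D i))) (h (eps (D i))) = h (pcomp (eps (D i)) (eps (D i)))"
        using hom eps_I[of "D i" n] by simp
      then show "mult (h (eps (D i))) (h (eps (D i))) = h (eps (D i))" by (simp add: eps_comp)
    qed
    then have "((\<lambda>i. h (eps (D i))) \<longlongrightarrow> mult g g) U"
      using t by (rule tendsto_cong[THEN iffD1])
    then show ?thesis using tendsto_unique[OF Ub _ lim] by blast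
  qed
  show ?thesis using finE cardE gg idem by metis
qed



lemma finite_maps_sub: assumes "finite A" "finite B"
  shows "finite {m. dom m \<subseteq> A \<and> ran m \<subseteq> B}"
proof -
  have "{m. dom m \<subseteq> A \<and> ran m \<subseteq> B} = (\<Union>C\<in>Pow A. {m. dom m = C \<and> ran m \<subseteq> B})" by blast
  moreover have "finite (\<Union>C\<in>Pow A. {m. dom m = C \<and> ran m \<subseteq> B})"
  proof (rule finite_UN_I)
    show "finite (Pow A)" using assms(1) by simp
    fix C assume "C \<in> Pow A"
    then have "finite C" using assms(1) finite_subset by blast
    then show "finite {m. dom m = C \<and> ran m \<subseteq> B}" using assms(2) by (rule finite_set_of_finite_maps)
  qed
  ultimately show ?thesis by simp
qed

lemma mem_image:
  fixes n :: nat
    and mult :: "'b::t2_space \<Rightarrow> 'b \<Rightarrow> 'b"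
    and h :: "('a \<rightharpoonup> 'a) \<Rightarrow> 'b"
  assumes tis: "topological_inverse_semigroup mult"
    and hom: "\<forall>\<alpha>\<in>I_rank n. \<forall>\<beta>\<in>I_rank n. h (pcomp \<alpha> \<beta>) = mult (h \<alpha>) (h \<beta>)"
    and near: "\<And>T. open T \<Longrightarrow> x \<in> T \<Longrightarrow> \<exists>\<alpha>\<in>I_rank n. h \<alpha> \<in> T"
  shows "x \<in> h ` I_rank n"
proof -
  let ?I = "I_rank n :: ('a \<rightharpoonup> 'a) set"
  have isg: "inverse_semigroup mult" and c: "continuous_on UNIV (\<lambda>p. mult (fst p) (snd p))"
    and ci: "continuous_on UNIV (sg_inverse mult)"
    using tis by (auto simp: topological_inverse_semigroup_def)
  have assoc: "\<And>a b c. mult (mult a b) c = mult a (mult b c)"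
    using isg by (simp add: inverse_semigroup_def)
  have H: "\<And>x y. x \<in> ?I \<Longrightarrow> y \<in> ?I \<Longrightarrow> h (pcomp x y) = mult (h x) (h y)"
    using hom by simp
  define F0 where "F0 = inf (filtercomap h (nhds x)) (principal ?I)"
  have F0: "F0 \<noteq> bot"
  proof
    assume "F0 = bot"
    then have "eventually (\<lambda>_. False) F0" by simp
    then have "eventually (\<lambda>\<alpha>. \<alpha> \<in> ?I \<longrightarrow> False) (filtercomap h (nhds x))"
      unfolding F0_def eventually_inf_principal .
    then obtain P where P: "eventually P (nhds x)" "\<And>\<alpha>. P (h \<alpha>) \<Longrightarrow> \<alpha> \<notin> ?I"
      unfolding eventually_filtercomap by blast
    then obtain S where S: "open S" "x \<in> S" "\<And>y. y \<in> S \<Longrightarrow> P y"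
      unfolding eventually_nhds by blast
    then obtain \<alpha> where "\<alpha> \<in> ?I" "h \<alpha> \<in> S" using near by blast
    then show False using S(3) P(2) by blast
  qed
  obtain U where UF: "U \<le> F0" and U: "uf U" using ex_uf[OF F0] by blast
  have Ub: "U \<noteq> bot" using U by (simp add: uf_def)
  have evI: "eventually (\<lambda>\<alpha>. \<alpha> \<in> ?I) U"
  proof -
    have "eventually (\<lambda>\<alpha>. \<alpha> \<in> ?I) F0" unfolding F0_def
      by (simp add: eventually_inf_principal)
    then show ?thesis using filter_leD[OF UF] by blast
  qed
  have limh: "(h \<longlongrightarrow> x) U"
  proof -
    have "filtermap h U \<le> filtermap h (filtercomap h (nhds x))"
      using UF unfolding F0_def by (intro filtermap_mono) (rule order_trans, assumption, rule inf_le1)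
    also have "\<dots> \<le> nhds x" by (rule filtermap_filtercomap)
    finally show ?thesis unfolding filterlim_def .
  qed
  define y where "y = sg_inverse mult x"
  have xy: "mult (mult x y) x = x" unfolding y_def using sg_inv_prop[OF isg] by blast
  have limy: "((\<lambda>\<alpha>. h (pinv \<alpha>)) \<longlongrightarrow> y) U"
  proof -
    have "((\<lambda>\<alpha>. sg_inverse mult (h \<alpha>)) \<longlongrightarrow> y) U"
      unfolding y_def using continuous_on_tendsto_compose[OF ci limh] by simp
    moreover have "eventually (\<lambda>\<alpha>. sg_inverse mult (h \<alpha>) = h (pinv \<alpha>)) U"
      using evI by (rule eventually_mono) (simp add: sg_inv_h[OF isg hom])
    ultimately show ?thesis by (rule tendsto_cong[THEN iffD1, rotated])
  qed
  have evpb: "eventually (\<lambda>\<alpha>. \<alpha> \<in> ?I \<and> partial_bijection \<alpha> \<and> pinv \<alpha> \<in> ?I) U"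
    using evI
  proof (rule eventually_mono)
    fix \<alpha> assume a: "\<alpha> \<in> ?I"
    then show "\<alpha> \<in> ?I \<and> partial_bijection \<alpha> \<and> pinv \<alpha> \<in> ?I"
      using pinv_I[OF a] unfolding I_rank_def by blast
  qed
  have limA: "((\<lambda>\<alpha>. h (eps (dom \<alpha>))) \<longlongrightarrow> mult x y) U"
  proof -
    have "((\<lambda>\<alpha>. mult (h \<alpha>) (h (pinv \<alpha>))) \<longlongrightarrow> mult x y) U"
      by (rule tend_mult[OF c limh limy])
    moreover have "eventually (\<lambda>\<alpha>. mult (h \<alpha>) (h (pinv \<alpha>)) = h (eps (dom \<alpha>))) U"
      using evpb by (rule eventually_mono) (simp add: H[symmetric] comp1)
    ultimately show ?thesis by (rule tendsto_cong[THEN iffD1, rotated])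
  qed
  have limB: "((\<lambda>\<alpha>. h (eps (ran \<alpha>))) \<longlongrightarrow> mult y x) U"
  proof -
    have "((\<lambda>\<alpha>. mult (h (pinv \<alpha>)) (h \<alpha>)) \<longlongrightarrow> mult y x) U"
      by (rule tend_mult[OF c limy limh])
    moreover have "eventually (\<lambda>\<alpha>. mult (h (pinv \<alpha>)) (h \<alpha>) = h (eps (ran \<alpha>))) U"
      using evpb by (rule eventually_mono) (simp add: H[symmetric] comp2)
    ultimately show ?thesis by (rule tendsto_cong[THEN iffD1, rotated])
  qed
  have evD: "eventually (\<lambda>\<alpha>. finite (dom \<alpha>) \<and> card (dom \<alpha>) \<le> n) U"
    using evpb
  proof (rule eventually_mono)
    fix \<alpha> assume a: "\<alpha> \<in> ?I \<and> partial_bijection \<alpha> \<and> pinv \<alpha> \<in> ?I"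
    then have "ran (pinv \<alpha>) = dom \<alpha>" using dom_pinv by blast
    then show "finite (dom \<alpha>) \<and> card (dom \<alpha>) \<le> n" using a unfolding I_rank_def by simp
  qed
  have evR: "eventually (\<lambda>\<alpha>. finite (ran \<alpha>) \<and> card (ran \<alpha>) \<le> n) U"
    using evI by (rule eventually_mono) (simp add: I_rank_def)
  obtain A where A: "finite A" "card A \<le> n" "mult x y = h (eps A)"
    using idem_lim[OF c hom U evD limA] by blast
  obtain B where B: "finite B" "card B \<le> n" "mult y x = h (eps B)"
    using idem_lim[OF c hom U evR limB] by blast
  have AI: "eps A \<in> ?I" and BI: "eps B \<in> ?I" using A B eps_I by auto
  have xeq: "x = mult (mult (h (eps A)) x) (h (eps B))"
  proof -
    have "mult (mult (mult x y) x) (mult y x) = mult x (mult y x)" using xy by simp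
    also have "\<dots> = x" using xy assoc by simp
    finally show ?thesis using A B by simp
  qed
  define \<phi> where "\<phi> \<alpha> = pcomp (pcomp (eps A) \<alpha>) (eps B)" for \<alpha>
  have limphi: "((\<lambda>\<alpha>. h (\<phi> \<alpha>)) \<longlongrightarrow> x) U"
  proof -
    have "((\<lambda>\<alpha>. mult (mult (h (eps A)) (h \<alpha>)) (h (eps B))) \<longlongrightarrow> mult (mult (h (eps A)) x) (h (eps B))) U"
      by (rule tend_mult[OF c tend_mult[OF c tendsto_const limh] tendsto_const])
    moreover have "eventually (\<lambda>\<alpha>. mult (mult (h (eps A)) (h \<alpha>)) (h (eps B)) = h (\<phi> \<alpha>)) U"
      using evI
    proof (rule eventually_mono)
      fix \<alpha> assume a: "\<alpha> \<in> ?I"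
      have "h (\<phi> \<alpha>) = mult (h (pcomp (eps A) \<alpha>)) (h (eps B))"
        unfolding \<phi>_def using H[OF pcomp_I[OF AI a] BI] .
      also have "\<dots> = mult (mult (h (eps A)) (h \<alpha>)) (h (eps B))" using H[OF AI a] by simp
      finally show "mult (mult (h (eps A)) (h \<alpha>)) (h (eps B)) = h (\<phi> \<alpha>)" by simp
    qed
    ultimately have "((\<lambda>\<alpha>. h (\<phi> \<alpha>)) \<longlongrightarrow> mult (mult (h (eps A)) x) (h (eps B))) U"
      by (rule tendsto_cong[THEN iffD1, rotated])
    then show ?thesis using xeq by simp
  qed
  have evS: "eventually (\<lambda>\<alpha>. \<phi> \<alpha> \<in> {m. dom m \<subseteq> A \<and> ran m \<subseteq> B}) U"
  proof (rule always_eventually, intro allI)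
    fix \<alpha>
    have "dom (\<phi> \<alpha>) \<subseteq> A" unfolding \<phi>_def
      using dom_comp_sub[of "pcomp (eps A) \<alpha>" "eps B"] dom_comp_sub[of "eps A" \<alpha>] by simp
    moreover have "ran (\<phi> \<alpha>) \<subseteq> B" unfolding \<phi>_def
      using ran_comp_sub[of "pcomp (eps A) \<alpha>" "eps B"] by simp
    ultimately show "\<phi> \<alpha> \<in> {m. dom m \<subseteq> A \<and> ran m \<subseteq> B}" by simp
  qed
  obtain cc where cc: "eventually (\<lambda>\<alpha>. \<phi> \<alpha> = cc) U"
    using uf_finite_const[OF U finite_maps_sub[OF A(1) B(1)] evS] by blast
  have "eventually (\<lambda>\<alpha>. h (\<phi> \<alpha>) = h cc) U"
    using cc by (rule eventually_mono) simp
  then have "x = h cc" by (rule lim_ev_const[OF Ub limphi])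
  moreover have "cc \<in> ?I"
  proof -
    obtain \<alpha> where "\<phi> \<alpha> = cc" "\<alpha> \<in> ?I"
      using eventually_happens'[OF Ub eventually_conj[OF cc evI]] by blast
    then show ?thesis unfolding \<phi>_def using pcomp_I[OF pcomp_I[OF AI] BI] by blast
  qed
  ultimately show ?thesis by blast
qed

theorem theorem1:
  fixes n :: nat
    and mult :: "'b::t2_space \<Rightarrow> 'b \<Rightarrow> 'b"
    and h :: "('a \<rightharpoonup> 'a) \<Rightarrow> 'b"
  assumes "n \<ge> 1"
    and "topological_inverse_semigroup mult"
    and "\<forall>\<alpha>\<in>I_rank n. \<forall>\<beta>\<in>I_rank n. h (pcomp \<alpha> \<beta>) = mult (h \<alpha>) (h \<beta>)"
  shows "closed (h ` I_rank n)"
  unfolding closed_def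
proof (subst open_subopen, intro ballI)
  fix x assume x: "x \<in> - h ` I_rank n"
  show "\<exists>T. open T \<and> x \<in> T \<and> T \<subseteq> - h ` I_rank n"
  proof (rule ccontr)
    assume nT: "\<not> ?thesis"
    have "x \<in> h ` I_rank n"
    proof (rule mem_image[OF assms(2) assms(3)])
      fix T assume "open T" "x \<in> T"
      then show "\<exists>\<alpha>\<in>I_rank n. h \<alpha> \<in> T" using nT by blast
    qed
    then show False using x by simp
  qed
qed

end
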